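(* Let $X$ be a real topological vector space, let $C$ be a convex subset of $X$, and let $f:X\times X\to\mathbb{R}$ be a bifunction such that $f(x,\cdot)$ is quasi-convex for each $x\in X$. If $f$ is cyclically quasi-monotone on $C$, then $f$ is properly quasi-monotone on $C$.
   Context: A function $h:X\to\mathbb{R}$ is quasi-convex if all its sublevel sets $\{x: h(x)\leq\lambda\}$ are convex. The bifunction $f$ is cyclically quasi-monotone on $C$ if for every $n\in\mathbb{N}$ and all $x_0,\dots,x_n\in C$ there is $i\in\{0,\dots,n\}$ with $f(x_i,x_{i+1})\leq0$, where $x_{n+1}:=x_0$. It is properly quasi-monotone on $C$ if for every finite non-empty $A\subset C$ and every $x\in\operatorname{co}(A)$ one has $\min_{a\in A}f(a,x)\leq0$. *)

theory Defs
  imports "HOL-Analysis.Analysis"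
begin

definition quasi_convex :: "('a::real_vector \<Rightarrow> real) \<Rightarrow> bool" where
  "quasi_convex h \<longleftrightarrow> (\<forall>c::real. convex {x. h x \<le> c})"

definition cyclically_quasi_monotone :: "('a \<Rightarrow> 'a \<Rightarrow> real) \<Rightarrow> 'a set \<Rightarrow> bool" where
  "cyclically_quasi_monotone f C \<longleftrightarrow>
     (\<forall>(n::nat) (x::nat \<Rightarrow> 'a). (\<forall>i\<le>n. x i \<in> C) \<longrightarrow>
        (\<exists>i\<le>n. f (x i) (if i = n then x 0 else x (Suc i)) \<le> 0))"

definition properly_quasi_monotone :: "('a::real_vector \<Rightarrow> 'a \<Rightarrow> real) \<Rightarrow> 'a set \<Rightarrow> bool" where
  "properly_quasi_monotone f C \<longleftrightarrow>
     (\<forall>A x. finite A \<and> A \<noteq> {} \<and> A \<subseteq> C \<and> x \<in> convex hull A \<longrightarrow>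
        (MIN a\<in>A. f a x) \<le> 0)"

end

theory Submission
  imports Defs
begin

lemma cycle_lemma:
  fixes f :: "'a \<Rightarrow> 'a \<Rightarrow> real"
  assumes fin: "finite A" and a: "a \<in> A" and gA: "\<And>b. b \<in> A \<Longrightarrow> g b \<in> A"
    and pos: "\<And>b. b \<in> A \<Longrightarrow> f b (g b) > 0"
    and cq: "cyclically_quasi_monotone f C" and sub: "A \<subseteq> C"
  shows False
proof -
  define h where "h k = (g ^^ k) a" for k
  have hA: "h k \<in> A" for k
    by (induction k) (auto simp: h_def a gA)
  have hS: "h (Suc k) = g (h k)" for k by (simp add: h_def)
  have "\<not> inj_on h {..card A}"
  proof
    assume "inj_on h {..card A}"
    then have "card (h ` {..card A}) = card {..card A}" by (rule card_image)
    moreover have "card (h ` {..card A}) \<le> card A"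
      using hA fin by (intro card_mono) auto
    ultimately show False by simp
  qed
  then obtain i j where ij: "i < j" "h i = h j"
    unfolding inj_on_def by (metis linorder_neqE_nat)
  define n where "n = j - i - 1"
  define x where "x k = h (i + k)" for k
  have "\<forall>k\<le>n. x k \<in> C" using hA sub by (auto simp: x_def)
  with cq obtain k where k: "k \<le> n" "f (x k) (if k = n then x 0 else x (Suc k)) \<le> 0"
    unfolding cyclically_quasi_monotone_def by blast
  have "(if k = n then x 0 else x (Suc k)) = g (x k)"
  proof (cases "k = n")
    case True
    then have "i + k + 1 = j" using ij n_def by simp
    then have "g (x k) = h j" using hS[of "i+k"] by (simp add: x_def)
    then show ?thesis using True ij by (simp add: x_def)
  next
    case False
    then show ?thesis by (simp add: x_def hS)
  qed
  with k pos[OF hA[of "i+k"]] show False by (simp add: x_def)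
qed

theorem proposition3p3:
  fixes f :: "'a::real_vector \<Rightarrow> 'a \<Rightarrow> real" and C :: "'a set"
  assumes "convex C"
    and "\<And>x. quasi_convex (f x)"
    and "cyclically_quasi_monotone f C"
  shows "properly_quasi_monotone f C"
  unfolding properly_quasi_monotone_def
proof (intro allI impI)
  fix A x assume H: "finite A \<and> A \<noteq> {} \<and> A \<subseteq> C \<and> x \<in> convex hull A"
  show "(MIN a\<in>A. f a x) \<le> 0"
  proof (rule ccontr)
    assume "\<not> (MIN a\<in>A. f a x) \<le> 0"
    then have allpos: "\<forall>a\<in>A. 0 < f a x" proof -
      have "0 < Min ((\<lambda>a. f a x) ` A)" using \<open>\<not> (MIN a\<in>A. f a x) \<le> 0\<close> by linarith
      then show ?thesis using H by (simp add: Min_gr_iff)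
    qed
    have ex: "\<exists>b\<in>A. f a b > 0" if "a \<in> A" for a
    proof (rule ccontr)
      assume "\<not> (\<exists>b\<in>A. f a b > 0)"
      then have "A \<subseteq> {y. f a y \<le> 0}" by auto
      moreover have "convex {y. f a y \<le> 0}"
        using assms(2)[of a] unfolding quasi_convex_def by blast
      ultimately have "convex hull A \<subseteq> {y. f a y \<le> 0}" by (rule hull_minimal)
      then have "f a x \<le> 0" using H by auto
      with allpos that show False by auto
    qed
    define g where "g a = (SOME b. b \<in> A \<and> f a b > 0)" for a
    have g: "g a \<in> A \<and> f a (g a) > 0" if "a \<in> A" for a
      using someI_ex[OF ex[OF that, unfolded Bex_def]] by (simp add: g_def)
    obtain a where "a \<in> A" using H by auto
    show False
      using cycle_lemma[of A a g f C] g H assms(3) \<open>a \<in> A\<close> by blast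
  qed
qed

end
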